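(* Let $n\ge 1$, $k\ge 1$, and let $s_1,\dots,s_k$ be nonnegative integers. There are $k$ players who independently each open one cereal box per time step; each box contains one of $n$ coupon types chosen uniformly at random, independently of everything else. Player $i$ is currently missing $s_i$ of the $n$ coupon types. Let $X_i(s_i)$ be the number of boxes player $i$ must open until they have all $n$ types, and let $$M(s_1,\dots,s_k):=\mathbb{E}\left[\max\{X_1(s_1),\dots,X_k(s_k)\}\right]$$ be the expected number of boxes required for the slowest player to complete the collection. Then, with $S:=\sum_{i=1}^k s_i$, $$M(s_1,\dots,s_k)=nH(S)-\frac{\left(H(S)-1\right)\sum_{i<j}s_is_j}{S(S-1)}+o(1).$$
   Context: $H(m)=\sum_{j=1}^m\frac1j$ denotes the $m$-th harmonic number. The term $o(1)$ denotes a quantity tending to $0$ as $n\to\infty$ with $k$ and $s_1,\dots,s_k$ fixed. *)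

theory Defs
  imports "HOL-Probability.Probability"
begin

text \<open>Sample space: omega (i,t) is the coupon type (in {0..<n}) found in the box
  opened by player i at time step t (t = 0,1,2,...). All boxes are i.i.d. uniform.\<close>
definition coupon_space :: "nat \<Rightarrow> ((nat \<times> nat) \<Rightarrow> nat) measure" where
  "coupon_space n = PiM UNIV (\<lambda>_. measure_pmf (pmf_of_set {..<n}))"

definition completion_time :: "nat set \<Rightarrow> (nat \<Rightarrow> nat) \<Rightarrow> nat" where
  "completion_time A f = (LEAST m. A \<subseteq> f ` {..<m})"

text \<open>Expected time for the slowest of the k players; player i misses the types in A i.\<close>
definition max_completion :: "nat \<Rightarrow> nat \<Rightarrow> (nat \<Rightarrow> nat set) \<Rightarrow> real" where
  "max_completion n k A =
     integral\<^sup>L (coupon_space n)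
       (\<lambda>\<omega>. real (Max ((\<lambda>i. completion_time (A i) (\<lambda>t. \<omega> (i, t))) ` {..<k})))"

end

theory Submission
  imports Defs "HOL-Real_Asymp.Real_Asymp"
begin


lemma sum_Pow_insert:
  assumes "finite R" "r \<notin> R"
  shows "(\<Sum>U\<in>Pow (insert r R). f U) = (\<Sum>U\<in>Pow R. f U) + (\<Sum>U\<in>Pow R. f (insert r U))"
proof -
  have "Pow (insert r R) = Pow R \<union> insert r ` Pow R" by (rule Pow_insert)
  moreover have "Pow R \<inter> insert r ` Pow R = {}" using assms(2) by auto
  moreover have "inj_on (insert r) (Pow R)" using assms(2)
    by (smt (verit, ccfv_SIG) PowD inj_on_def insert_ident subset_iff)
  ultimately show ?thesis using assms(1)
    by (simp add: sum.union_disjoint sum.reindex)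
qed

definition bco :: "nat \<Rightarrow> nat \<Rightarrow> real" where
  "bco c N = fact N * fact c / fact (N + c + 1)"

lemma fact_pos_real: "(fact m :: real) > 0" by simp

lemma bco_SucN: "bco c (Suc N) = bco c N * (N + 1) / (N + c + 2)"
proof -
  have "Suc N + c + 1 = Suc (N + c + 1)" by simp
  then have e: "(fact (Suc N + c + 1) :: real) = (N + c + 2) * fact (N + c + 1)"
    by (simp only: fact_Suc) (simp add: algebra_simps)
  have e2: "(fact (Suc N) :: real) = (N + 1) * fact N" by (simp add: algebra_simps)
  show ?thesis unfolding bco_def e e2 using fact_pos_real[of "N+c+1"]
    by (simp add: field_simps)
qed

lemma bco_Succ: "bco (Suc c) N = bco c N * (c + 1) / (N + c + 2)"
proof -
  have "N + Suc c + 1 = Suc (N + c + 1)" by simp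
  then have e: "(fact (N + Suc c + 1) :: real) = (N + c + 2) * fact (N + c + 1)"
    by (simp only: fact_Suc) (simp add: algebra_simps)
  have e2: "(fact (Suc c) :: real) = (c + 1) * fact c" by (simp add: algebra_simps)
  show ?thesis unfolding bco_def e e2 using fact_pos_real[of "N+c+1"]
    by (simp add: field_simps)
qed

lemma bco_0: "bco c 0 = 1 / (c + 1)"
proof -
  have "(fact (0 + c + 1) :: real) = (c + 1) * fact c" by (simp add: algebra_simps)
  moreover have "(c + 1) * (fact c :: real) > 0" by simp
  ultimately show ?thesis unfolding bco_def by (simp add: field_simps)
qed

lemma bco_0N: "bco 0 N = 1 / (N + 1)"
  by (induction N) (simp_all add: bco_0 bco_SucN field_simps)

lemma bco_rec: "bco c N - bco (Suc c) N = bco c (Suc N)"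
  unfolding bco_SucN bco_Succ by (simp add: field_simps)

lemma sum_alt_inv:
  assumes "finite R"
  shows "(\<Sum>U\<in>Pow R. (-1) ^ card U / real (card U + c + 1)) = bco c (card R)"
  using assms
proof (induction R arbitrary: c rule: finite_induct)
  case empty
  then show ?case by (simp add: bco_def)
next
  case (insert r R)
  have "(\<Sum>U\<in>Pow (insert r R). (-1) ^ card U / real (card U + c + 1))
     = (\<Sum>U\<in>Pow R. (-1) ^ card U / real (card U + c + 1))
       + (\<Sum>U\<in>Pow R. (-1) ^ card (insert r U) / real (card (insert r U) + c + 1))"
    by (rule sum_Pow_insert[OF insert(1,2)])
  also have "(\<Sum>U\<in>Pow R. (-1) ^ card (insert r U) / real (card (insert r U) + c + 1))
      = - (\<Sum>U\<in>Pow R. (-1) ^ card U / real (card U + Suc c + 1))"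
    unfolding sum_negf[symmetric]
  proof (rule sum.cong[OF refl])
    fix U assume "U \<in> Pow R"
    then have "card (insert r U) = Suc (card U)" using insert(1,2)
      by (meson PowD card_insert_disjoint finite_subset in_mono)
    then show "(-1) ^ card (insert r U) / real (card (insert r U) + c + 1)
       = - ((-1) ^ card U / real (card U + Suc c + 1))" by simp
  qed
  finally show ?case using insert(1,2) insert(3)[of c] insert(3)[of "Suc c"] bco_rec[of c "card R"]
    by simp
qed

lemma sum_alt_inv2:
  assumes "finite R"
  shows "(\<Sum>U\<in>Pow R. (-1) ^ card U / (real (card U + c + 1))^2)
     = bco c (card R) * (harm (card R + c + 1) - harm c)"
  using assms
proof (induction R arbitrary: c rule: finite_induct)
  case empty
  then show ?case by (simp add: bco_0 harm_Suc power2_eq_square field_simps)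
next
  case (insert r R)
  have "(\<Sum>U\<in>Pow (insert r R). (-1) ^ card U / (real (card U + c + 1))^2)
     = (\<Sum>U\<in>Pow R. (-1) ^ card U / (real (card U + c + 1))^2)
       + (\<Sum>U\<in>Pow R. (-1) ^ card (insert r U) / (real (card (insert r U) + c + 1))^2)"
    by (rule sum_Pow_insert[OF insert(1,2)])
  also have "(\<Sum>U\<in>Pow R. (-1) ^ card (insert r U) / (real (card (insert r U) + c + 1))^2)
      = - (\<Sum>U\<in>Pow R. (-1) ^ card U / (real (card U + Suc c + 1))^2)"
    unfolding sum_negf[symmetric]
  proof (rule sum.cong[OF refl])
    fix U assume "U \<in> Pow R"
    then have "card (insert r U) = Suc (card U)" using insert(1,2)
      by (meson PowD card_insert_disjoint finite_subset in_mono)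
    then show "(-1) ^ card (insert r U) / (real (card (insert r U) + c + 1))^2
       = - ((-1) ^ card U / (real (card U + Suc c + 1))^2)" by simp
  qed
  finally have L: "(\<Sum>U\<in>Pow (insert r R). (-1) ^ card U / (real (card U + c + 1))^2)
     = bco c (card R) * (harm (card R + c + 1) - harm c)
       - bco (Suc c) (card R) * (harm (card R + Suc c + 1) - harm (Suc c))"
    using insert(3)[of c] insert(3)[of "Suc c"] by simp
  define N where "N = card R"
  have cR: "card (insert r R) = Suc N" using insert(1,2) N_def by simp
  note b1 = bco_Succ[of c N]
  note b2 = bco_SucN[of c N]
  have h1: "harm (N + Suc c + 1) = harm (N + c + 1) + 1 / (N + c + 2)"
    by (simp add: harm_Suc field_simps)
  have h2: "harm (Suc N + c + 1) = harm (N + c + 1) + 1 / (N + c + 2)"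
    by (simp add: harm_Suc field_simps)
  have h3: "harm (Suc c) = harm c + 1 / (c + 1)"
    by (simp add: harm_Suc field_simps)
  have alg: "B * (h - hc) - B * (cc + 1) / d * (h + 1 / d - (hc + 1 / (cc + 1)))
      = B * (NN + 1) / d * (h + 1 / d - hc)" if "d = NN + cc + 2" "NN \<ge> 0" "cc \<ge> 0"
    for B h hc cc d NN :: real
  proof -
    have d0: "d \<noteq> 0" and c0: "cc + 1 \<noteq> 0" using that by auto
    have "B * (cc + 1) / d * (h + 1 / d - (hc + 1 / (cc + 1)))
        = B * (cc + 1) / d * (h - hc) + B * (cc + 1) / d^2 - B / d"
    proof -
      have e2: "B*(cc+1)/d * ((h-hc) + 1/d - 1/(cc+1)) = B*(cc+1)/d*(h-hc) + B*(cc+1)/d*(1/d) - B*(cc+1)/d*(1/(cc+1))"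
        by (simp only: ring_distribs)
      have e3: "B*(cc+1)/d*(1/(cc+1)) = B/d" using c0 by simp
      have e4: "B*(cc+1)/d*(1/d) = B*(cc+1)/d^2" by (simp add: power2_eq_square)
      show ?thesis using e2 e3 e4 by (simp add: algebra_simps)
    qed
    then have "B * (h - hc) - B * (cc + 1) / d * (h + 1 / d - (hc + 1 / (cc + 1)))
        = B * (h - hc) * ((d - (cc + 1)) / d) + B * ((d - (cc + 1)) / d^2)"
      apply (simp only:)
      using d0 by (simp add: field_simps power2_eq_square)
    also have "\<dots> = B * (h - hc) * ((NN + 1) / d) + B * ((NN + 1) / d^2)"
      using that(1) by simp
    also have "\<dots> = B * (NN + 1) / d * (h + 1 / d - hc)"
      using d0 by (simp add: field_simps power2_eq_square)
    finally show ?thesis .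
  qed
  show ?case unfolding L cR N_def[symmetric] b1 b2 h1 h2 h3
    using alg[where d="real (N+c+2)" and NN="real N" and cc="real c" and B="bco c N"
        and h="harm (N + c + 1)" and hc="harm c"] by (simp add: add.commute)
qed

lemma sum_harm:
  assumes "finite Q"
  shows "(\<Sum>T\<in>Pow Q. (-1) ^ (card T + 1) / real (card T)) = harm (card Q)"
  using assms
proof (induction Q rule: finite_induct)
  case empty
  then show ?case by (simp add: harm_def)
next
  case (insert r R)
  have "(\<Sum>T\<in>Pow (insert r R). (-1) ^ (card T + 1) / real (card T))
     = (\<Sum>T\<in>Pow R. (-1) ^ (card T + 1) / real (card T))
       + (\<Sum>U\<in>Pow R. (-1) ^ (card (insert r U) + 1) / real (card (insert r U)))"
    by (rule sum_Pow_insert[OF insert(1,2)])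
  also have "(\<Sum>U\<in>Pow R. (-1) ^ (card (insert r U) + 1) / real (card (insert r U)))
      = (\<Sum>U\<in>Pow R. (-1) ^ card U / real (card U + 0 + 1))"
  proof (rule sum.cong[OF refl])
    fix U assume "U \<in> Pow R"
    then have "card (insert r U) = Suc (card U)" using insert(1,2)
      by (meson PowD card_insert_disjoint finite_subset in_mono)
    then show "(-1) ^ (card (insert r U) + 1) / real (card (insert r U))
       = (-1) ^ card U / real (card U + 0 + 1)" by simp
  qed
  also have "\<dots> = bco 0 (card R)" by (rule sum_alt_inv[OF insert(1)])
  finally show ?case using insert(1,2,3)
    by (simp add: bco_0N harm_Suc field_simps)
qed



definition jv :: "(nat \<times> nat) set \<Rightarrow> nat \<Rightarrow> nat" where
  "jv T i = card {x\<in>T. fst x = i}"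

definition e2 :: "nat \<Rightarrow> (nat \<times> nat) set \<Rightarrow> real" where
  "e2 k T = (\<Sum>i<k. \<Sum>l<i. real (jv T i) * real (jv T l))"

lemma pair_sum:
  assumes "finite Q" "x \<in> Q" "y \<in> Q" "x \<noteq> y"
  shows "(\<Sum>T\<in>Pow Q. if x \<in> T \<and> y \<in> T then w (card T) else 0)
       = (\<Sum>U\<in>Pow (Q - {x, y}). (w (card U + 2) :: real))"
proof -
  define R where "R = Q - {x, y}"
  have Q: "Q = insert x (insert y R)" using assms R_def by auto
  have fR: "finite R" using assms R_def by auto
  have xR: "x \<notin> insert y R" using assms R_def by auto
  have yR: "y \<notin> R" using R_def by auto
  let ?F = "\<lambda>T. if x \<in> T \<and> y \<in> T then w (card T) else (0::real)"
  have "(\<Sum>T\<in>Pow Q. ?F T) = (\<Sum>T\<in>Pow (insert y R). ?F T) + (\<Sum>T\<in>Pow (insert y R). ?F (insert x T))"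
    unfolding Q by (rule sum_Pow_insert) (use fR xR in auto)
  also have "(\<Sum>T\<in>Pow (insert y R). ?F T) = 0"
    by (rule sum.neutral) (use xR in auto)
  also have "(\<Sum>T\<in>Pow (insert y R). ?F (insert x T))
      = (\<Sum>T\<in>Pow R. ?F (insert x T)) + (\<Sum>T\<in>Pow R. ?F (insert x (insert y T)))"
    by (rule sum_Pow_insert) (use fR yR in auto)
  also have "(\<Sum>T\<in>Pow R. ?F (insert x T)) = 0"
    by (rule sum.neutral) (use yR assms(4) in auto)
  also have "(\<Sum>T\<in>Pow R. ?F (insert x (insert y T))) = (\<Sum>U\<in>Pow R. w (card U + 2))"
  proof (rule sum.cong[OF refl])
    fix U assume "U \<in> Pow R"
    then have "U \<subseteq> R" by auto
    then have "finite U" "x \<notin> insert y U" "y \<notin> U" using fR xR yR finite_subset by auto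
    then have "card (insert x (insert y U)) = card U + 2" by simp
    then show "?F (insert x (insert y U)) = w (card U + 2)" by simp
  qed
  finally show ?thesis unfolding R_def by simp
qed

lemma divide_mult_cancel_right_general: "(a::real) \<noteq> 0 \<Longrightarrow> a / (x * a) = 1 / x"
  by simp

lemma card_Int_sum: "finite A \<Longrightarrow> card (A \<inter> T) = (\<Sum>x\<in>A. if x \<in> T then 1 else (0::nat))"
  by (simp add: sum.If_cases Int_def)

definition Qset :: "nat \<Rightarrow> (nat \<Rightarrow> nat) \<Rightarrow> (nat \<times> nat) set" where
  "Qset k s = Sigma {..<k} (\<lambda>i. {..<s i})"

lemma finite_Qset: "finite (Qset k s)" unfolding Qset_def by auto

lemma jv_Qset:
  assumes "T \<subseteq> Qset k s" "i < k"
  shows "jv T i = card (({i} \<times> {..<s i}) \<inter> T)"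
proof -
  have "{x\<in>T. fst x = i} = ({i} \<times> {..<s i}) \<inter> T" using assms unfolding Qset_def by auto
  then show ?thesis unfolding jv_def by simp
qed

lemma second_order_sum:
  assumes S2: "card (Qset k s) \<ge> 2"
  defines "S \<equiv> card (Qset k s)"
  shows "(\<Sum>T\<in>Pow (Qset k s). (-1) ^ (card T + 1) * e2 k T / (real (card T))^2)
       = - (\<Sum>i<k. \<Sum>l<i. real (s i * s l)) * (harm S - 1) / (real S * (real S - 1))"
proof -
  let ?Q = "Qset k s"
  define w where "w m = (-1) ^ (m + 1) / (real m)^2" for m
  define c where "c = (\<Sum>U\<in>Pow (Qset k s - {(0,0), (1,1)}). w (card U + 2))"
  have cval: "(\<Sum>U\<in>Pow (?Q - {x, y}). w (card U + 2)) = - (harm S - 1) / (real S * (real S - 1))"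
    if "x \<in> ?Q" "y \<in> ?Q" "x \<noteq> y" for x y
  proof -
    have fin: "finite (?Q - {x, y})" using finite_Qset by auto
    have cR: "card (?Q - {x, y}) = S - 2" using that finite_Qset unfolding S_def
      by (subst card_Diff_subset) auto
    have "(\<Sum>U\<in>Pow (?Q - {x, y}). w (card U + 2))
        = - (\<Sum>U\<in>Pow (?Q - {x, y}). (-1) ^ card U / (real (card U + 1 + 1))^2)"
      unfolding sum_negf[symmetric] w_def by (rule sum.cong) (auto simp: add.commute)
    also have "\<dots> = - (bco 1 (S - 2) * (harm (S - 2 + 1 + 1) - harm 1))"
      using sum_alt_inv2[OF fin, of 1] cR by simp
    also have "S - 2 + 1 + 1 = S" using S2 S_def by simp
    also have "bco 1 (S - 2) = 1 / (real S * (real S - 1))"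
    proof -
      obtain N where N: "S = N + 2" using S2 S_def by (metis add.commute le_Suc_ex)
      have fe: "(fact (N + 1 + 1) :: real) = (real (N + 2) * real (N + 1)) * fact N"
        by (simp add: algebra_simps)
      have "(fact N :: real) > 0" by simp
      have "bco 1 N = fact N / ((real (N + 2) * real (N + 1)) * (fact N :: real))" unfolding bco_def
        by (simp only: fe fact_1 mult_1_right)
      also have "\<dots> = 1 / (real (N + 2) * real (N + 1))"
        using \<open>(fact N :: real) > 0\<close>
        by (intro divide_mult_cancel_right_general) auto
      finally have "bco 1 N = 1 / (real (N + 2) * real (N + 1))" .
      moreover have "real (N + 2) - 1 = N + 1" by simp
      ultimately show ?thesis unfolding N by (simp add: mult.commute)
    qed
    finally show ?thesis by (simp add: harm_def minus_divide_left)
  qed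
  have key: "(\<Sum>T\<in>Pow ?Q. w (card T) * (real (jv T i) * real (jv T l)))
        = real (s i * s l) * (- (harm S - 1) / (real S * (real S - 1)))"
    if "l < i" "i < k" for i l
  proof -
    have "(\<Sum>T\<in>Pow ?Q. w (card T) * (real (jv T i) * real (jv T l)))
        = (\<Sum>T\<in>Pow ?Q. \<Sum>x\<in>{i} \<times> {..<s i}. \<Sum>y\<in>{l} \<times> {..<s l}.
              (if x \<in> T \<and> y \<in> T then w (card T) else 0))"
    proof (rule sum.cong[OF refl])
      fix T assume "T \<in> Pow ?Q"
      then have T: "T \<subseteq> ?Q" by auto
      have "real (jv T i) * real (jv T l)
          = (\<Sum>x\<in>{i} \<times> {..<s i}. if x \<in> T then 1 else 0) * (\<Sum>y\<in>{l} \<times> {..<s l}. if y \<in> T then 1 else (0::real))"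
        unfolding jv_Qset[OF T that(2)] jv_Qset[OF T less_trans[OF that]]
        by (subst (1 2) card_Int_sum) (auto simp: of_nat_sum if_distrib cong: if_cong)
      also have "\<dots> = (\<Sum>x\<in>{i} \<times> {..<s i}. \<Sum>y\<in>{l} \<times> {..<s l}. if x \<in> T \<and> y \<in> T then 1 else 0)"
        unfolding sum_product by (intro sum.cong refl) auto
      finally show "w (card T) * (real (jv T i) * real (jv T l)) = (\<Sum>x\<in>{i} \<times> {..<s i}. \<Sum>y\<in>{l} \<times> {..<s l}.
              (if x \<in> T \<and> y \<in> T then w (card T) else 0))"
        by (simp add: sum_distrib_left if_distrib if_distribR cong: if_cong)
    qed
    also have "\<dots> = (\<Sum>x\<in>{i} \<times> {..<s i}. \<Sum>y\<in>{l} \<times> {..<s l}. \<Sum>T\<in>Pow ?Q.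
              (if x \<in> T \<and> y \<in> T then w (card T) else 0))"
      by (subst sum.swap) (simp add: sum.swap[of _ "Pow ?Q"])
    also have "\<dots> = (\<Sum>x\<in>{i} \<times> {..<s i}. \<Sum>y\<in>{l} \<times> {..<s l}. - (harm S - 1) / (real S * (real S - 1)))"
    proof (intro sum.cong refl)
      fix x y assume x: "x \<in> {i} \<times> {..<s i}" and y: "y \<in> {l} \<times> {..<s l}"
      have xQ: "x \<in> ?Q" "y \<in> ?Q" "x \<noteq> y" using x y that unfolding Qset_def by auto
      show "(\<Sum>T\<in>Pow ?Q. if x \<in> T \<and> y \<in> T then w (card T) else 0) = - (harm S - 1) / (real S * (real S - 1))"
        using pair_sum[OF finite_Qset xQ, of w] cval[OF xQ] by simp
    qed
    also have "\<dots> = real (s i * s l) * (- (harm S - 1) / (real S * (real S - 1)))"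
      by simp
    finally show ?thesis .
  qed
  have "(\<Sum>T\<in>Pow ?Q. (-1) ^ (card T + 1) * e2 k T / (real (card T))^2)
      = (\<Sum>T\<in>Pow ?Q. \<Sum>i<k. \<Sum>l<i. w (card T) * (real (jv T i) * real (jv T l)))"
    unfolding e2_def w_def by (simp add: sum_distrib_left sum_divide_distrib)
  also have "\<dots> = (\<Sum>i<k. \<Sum>l<i. \<Sum>T\<in>Pow ?Q. w (card T) * (real (jv T i) * real (jv T l)))"
    by (subst sum.swap) (simp add: sum.swap[of _ "Pow ?Q"])
  also have "\<dots> = (\<Sum>i<k. \<Sum>l<i. real (s i * s l) * (- (harm S - 1) / (real S * (real S - 1))))"
    by (intro sum.cong refl key) auto
  also have "\<dots> = (\<Sum>i<k. \<Sum>l<i. real (s i * s l)) * (- (harm S - 1) / (real S * (real S - 1)))"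
    by (simp only: sum_distrib_right)
  also have "\<dots> = - (\<Sum>i<k. \<Sum>l<i. real (s i * s l)) * (harm S - 1) / (real S * (real S - 1))"
    by (simp only: times_divide_eq_right mult_minus_right minus_divide_left)
  finally show ?thesis .
qed



lemma poly_bound:
  fixes j :: "nat \<Rightarrow> real" and K :: nat
  assumes "\<And>i. j i \<ge> 0"
  shows "\<exists>C\<ge>0. \<forall>x. 0 \<le> x \<and> x \<le> 1 \<longrightarrow>
     \<bar>(\<Prod>i<K. 1 - j i * x) - (1 - (\<Sum>i<K. j i) * x + (\<Sum>i<K. \<Sum>l<i. j i * j l) * x^2)\<bar> \<le> C * x^3"
proof (induction K)
  case 0
  then show ?case by (intro exI[of _ 0]) simp
next
  case (Suc K)
  then obtain C where C: "C \<ge> 0" "\<And>x. 0 \<le> x \<Longrightarrow> x \<le> 1 \<Longrightarrow>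
     \<bar>(\<Prod>i<K. 1 - j i * x) - (1 - (\<Sum>i<K. j i) * x + (\<Sum>i<K. \<Sum>l<i. j i * j l) * x^2)\<bar> \<le> C * x^3"
    by blast
  define a where "a = (\<Sum>i<K. j i)"
  define b where "b = (\<Sum>i<K. \<Sum>l<i. j i * j l)"
  have a0: "a \<ge> 0" unfolding a_def using assms by (simp add: sum_nonneg)
  have b0: "b \<ge> 0" unfolding b_def using assms by (intro sum_nonneg) (simp add: sum_nonneg)
  have jK: "j K \<ge> 0" using assms by simp
  show ?case
  proof (intro exI[of _ "b * j K + C * (1 + j K)"] conjI allI impI)
    show "0 \<le> b * j K + C * (1 + j K)" using b0 jK C(1) by simp
    fix x :: real assume x: "0 \<le> x \<and> x \<le> 1"
    define P where "P = (\<Prod>i<K. 1 - j i * x)"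
    define E where "E = P - (1 - a * x + b * x^2)"
    have E: "\<bar>E\<bar> \<le> C * x^3" unfolding E_def P_def a_def b_def using C(2) x by simp
    have aS: "(\<Sum>i<Suc K. j i) = a + j K" unfolding a_def by simp
    have bS: "(\<Sum>i<Suc K. \<Sum>l<i. j i * j l) = b + j K * a"
      unfolding a_def b_def by (simp add: sum_distrib_left)
    have pS: "(\<Prod>i<Suc K. 1 - j i * x) = P * (1 - j K * x)" unfolding P_def by simp
    have eq: "(\<Prod>i<Suc K. 1 - j i * x) - (1 - (\<Sum>i<Suc K. j i) * x + (\<Sum>i<Suc K. \<Sum>l<i. j i * j l) * x^2)
        = - b * j K * x^3 + E * (1 - j K * x)"
      unfolding aS bS pS E_def by (simp add: algebra_simps power2_eq_square power3_eq_cube)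
    have "\<bar>- b * j K * x^3 + E * (1 - j K * x)\<bar> \<le> b * j K * x^3 + \<bar>E\<bar> * (1 + j K)"
    proof -
      have "\<bar>1 - j K * x\<bar> \<le> 1 + j K" using x jK
      proof -
        have "j K * x \<le> j K" using x jK by (simp add: mult_left_le)
        moreover have "j K * x \<ge> 0" using x jK by simp
        ultimately show ?thesis by linarith
      qed
      then have "\<bar>E * (1 - j K * x)\<bar> \<le> \<bar>E\<bar> * (1 + j K)"
        by (simp add: abs_mult mult_left_mono)
      moreover have "\<bar>- b * j K * x^3\<bar> = b * j K * x^3" using b0 jK x by (simp add: abs_mult)
      ultimately show ?thesis by linarith
    qed
    also have "\<dots> \<le> b * j K * x^3 + C * x^3 * (1 + j K)"
      using E jK by (simp add: mult_right_mono)
    also have "\<dots> = (b * j K + C * (1 + j K)) * x^3" by (simp add: algebra_simps)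
    finally show "\<bar>(\<Prod>i<Suc K. 1 - j i * x) - (1 - (\<Sum>i<Suc K. j i) * x + (\<Sum>i<Suc K. \<Sum>l<i. j i * j l) * x^2)\<bar>
        \<le> (b * j K + C * (1 + j K)) * x^3" unfolding eq .
  qed
qed


lemma term_limit:
  fixes j :: "nat \<Rightarrow> real" and K :: nat
  assumes j0: "\<And>i. j i \<ge> 0"
  defines "a \<equiv> (\<Sum>i<K. j i)"
  defines "b \<equiv> (\<Sum>i<K. \<Sum>l<i. j i * j l)"
  assumes apos: "a > 0"
  shows "(\<lambda>n. 1 / (1 - (\<Prod>i<K. 1 - j i / real n)) - (real n / a + b / a^2)) \<longlonglongrightarrow> 0"
proof -
  have "\<exists>C\<ge>0. \<forall>x. 0 \<le> x \<and> x \<le> 1 \<longrightarrow>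
     \<bar>(\<Prod>i<K. 1 - j i * x) - (1 - a * x + b * x^2)\<bar> \<le> C * x^3"
    unfolding a_def b_def by (rule poly_bound[of j K, OF j0])
  then obtain C where C1: "\<forall>x. 0 \<le> x \<and> x \<le> 1 \<longrightarrow>
     \<bar>(\<Prod>i<K. 1 - j i * x) - (1 - a * x + b * x^2)\<bar> \<le> C * x^3"
    by (elim exE conjE)
  define E where "E n = (\<Prod>i<K. 1 - j i / real n) - (1 - a / real n + b / (real n)^2)" for n
  have Eb: "\<bar>E n\<bar> \<le> C / (real n)^3" if "n \<ge> 1" for n
  proof -
    have n1: "1 / real n \<le> 1" using that by simp
    have "\<bar>E n\<bar> \<le> C * (1 / real n)^3"
      using n1 C1[rule_format, of "1 / real n"] that unfolding E_def by (simp add: divide_inverse power2_eq_square)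
    then show ?thesis by (simp add: power_divide)
  qed
  have E1: "(\<lambda>n. E n * real n) \<longlonglongrightarrow> 0"
  proof (rule Lim_null_comparison)
    show "\<forall>\<^sub>F n in sequentially. norm (E n * real n) \<le> C / (real n)^2"
      using eventually_ge_at_top[of "1::nat"]
    proof eventually_elim
      case (elim n)
      have "norm (E n * real n) = \<bar>E n\<bar> * real n" by (simp add: abs_mult)
      also have "\<dots> \<le> C / (real n)^3 * real n" using mult_right_mono[OF Eb[OF elim], of "real n"] by simp
      also have "\<dots> = C / (real n)^2" using elim by (simp add: power3_eq_cube power2_eq_square)
      finally show ?case .
    qed
    show "(\<lambda>n. C / (real n)^2) \<longlonglongrightarrow> 0" by real_asymp
  qed
  have E2: "(\<lambda>n. E n * (real n)^2) \<longlonglongrightarrow> 0"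
  proof (rule Lim_null_comparison)
    show "\<forall>\<^sub>F n in sequentially. norm (E n * (real n)^2) \<le> C / real n"
      using eventually_ge_at_top[of "1::nat"]
    proof eventually_elim
      case (elim n)
      have "norm (E n * (real n)^2) = \<bar>E n\<bar> * (real n)^2" by (simp add: abs_mult)
      also have "\<dots> \<le> C / (real n)^3 * (real n)^2" using mult_right_mono[OF Eb[OF elim], of "(real n)^2"] by simp
      also have "\<dots> = C / real n" using elim by (simp add: power3_eq_cube power2_eq_square)
      finally show ?case .
    qed
    show "(\<lambda>n. C / real n) \<longlonglongrightarrow> 0" by real_asymp
  qed
  define D where "D n = a - b / real n - E n * real n" for n
  have bn: "(\<lambda>n. b / real n) \<longlonglongrightarrow> 0" by real_asymp
  have D: "D \<longlonglongrightarrow> a"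
    unfolding D_def using tendsto_diff[OF tendsto_diff[OF tendsto_const bn] E1] by simp
  have Dpos: "\<forall>\<^sub>F n in sequentially. D n > 0"
    using order_tendstoD(1)[OF D apos] .
  have lim: "(\<lambda>n. (b + E n * (real n)^2) / (a * D n) - b / a^2) \<longlonglongrightarrow> (b + 0) / (a * a) - b / a^2"
    by (intro tendsto_diff tendsto_divide tendsto_add tendsto_mult tendsto_const E2 D) (use apos in auto)
  have "(\<lambda>n. (b + E n * (real n)^2) / (a * D n) - b / a^2) \<longlonglongrightarrow> 0"
    using lim by (simp add: power2_eq_square)
  moreover have "\<forall>\<^sub>F n in sequentially.
     (b + E n * (real n)^2) / (a * D n) - b / a^2
     = 1 / (1 - (\<Prod>i<K. 1 - j i / real n)) - (real n / a + b / a^2)"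
    using Dpos eventually_ge_at_top[of "1::nat"]
  proof eventually_elim
    case (elim n)
    have n0: "real n > 0" using elim by simp
    have "D n / real n = a / real n - b / (real n)^2 - E n"
      using n0 by (simp add: D_def diff_divide_distrib power2_eq_square)
    then have "1 - (\<Prod>i<K. 1 - j i / real n) = D n / real n"
      unfolding E_def by simp
    then have "1 / (1 - (\<Prod>i<K. 1 - j i / real n)) = real n / D n" by simp
    moreover have "real n / D n - real n / a = (b + E n * (real n)^2) / (a * D n)"
    proof -
      have "real n / D n - real n / a = real n * (a - D n) / (a * D n)"
        using elim(1) apos by (simp add: field_simps)
      also have "real n * (a - D n) = b + E n * (real n)^2"
        using n0 by (simp add: D_def algebra_simps power2_eq_square)
      finally show ?thesis .
    qed
    ultimately show ?case by simp
  qed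
  ultimately show ?thesis by (rule Lim_transform_eventually)
qed



lemma cs_space[simp]: "space (coupon_space n) = UNIV"
  unfolding coupon_space_def by (simp add: space_PiM PiE_UNIV_domain)

lemma cs_sets_eq: "sets (coupon_space n) = sets (PiM UNIV (\<lambda>_. count_space UNIV) :: ((nat \<times> nat) \<Rightarrow> nat) measure)"
  unfolding coupon_space_def by (intro sets_PiM_cong) auto

lemma cs_comp[measurable]: "(\<lambda>\<omega>. \<omega> j) \<in> measurable (coupon_space n) (count_space UNIV)"
  unfolding measurable_cong_sets[OF cs_sets_eq refl] by measurable

lemma cs_prob: "n \<ge> 1 \<Longrightarrow> prob_space (coupon_space n)"
  unfolding coupon_space_def
  by (intro prob_space_PiM prob_space_measure_pmf)

lemma cs_cyl_sets: "finite J \<Longrightarrow> {\<omega>. \<forall>j\<in>J. \<omega> j \<in> X j} \<in> sets (coupon_space n)"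
proof -
  assume "finite J"
  have "{\<omega>\<in>space (coupon_space n). \<forall>j\<in>J. \<omega> j \<in> X j} \<in> sets (coupon_space n)"
    using \<open>finite J\<close> by measurable
  then show ?thesis by simp
qed

lemma cs_cyl:
  assumes "n \<ge> 1" "finite J"
  shows "measure (coupon_space n) {\<omega>. \<forall>j\<in>J. \<omega> j \<in> X j}
     = (\<Prod>j\<in>J. measure (measure_pmf (pmf_of_set {..<n})) (X j))"
proof -
  define p where "p = pmf_of_set {..<n}"
  interpret product_prob_space "\<lambda>_. measure_pmf p" UNIV
    by unfold_locales
  have "emeasure (coupon_space n) {\<omega>. \<forall>j\<in>J. \<omega> j \<in> X j}
      = (\<Prod>j\<in>J. emeasure (measure_pmf p) (X j))"
    using emeasure_PiM_Collect[of J X] assms(2) unfolding coupon_space_def p_def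
    by (simp add: space_PiM PiE_UNIV_domain)
  also have "\<dots> = ennreal (\<Prod>j\<in>J. measure (measure_pmf p) (X j))"
    by (simp add: measure_pmf.emeasure_eq_measure prod_ennreal)
  finally show ?thesis unfolding measure_def p_def
    by (simp add: prod_nonneg)
qed



definition Ev :: "nat \<Rightarrow> nat \<times> nat \<Rightarrow> ((nat \<times> nat) \<Rightarrow> nat) set" where
  "Ev m x = {\<omega>. \<forall>t<m. \<omega> (fst x, t) \<noteq> snd x}"

definition qf :: "nat \<Rightarrow> nat \<Rightarrow> (nat \<times> nat) set \<Rightarrow> real" where
  "qf n k T = (\<Prod>i<k. 1 - real (jv T i) / real n)"

lemma jv_alt: "jv T i = card {a. (i, a) \<in> T}"
proof -
  have "{x\<in>T. fst x = i} = Pair i ` {a. (i, a) \<in> T}" by force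
  moreover have "inj_on (Pair i) {a. (i, a) \<in> T}" by (auto simp: inj_on_def)
  ultimately show ?thesis unfolding jv_def by (simp add: card_image)
qed

lemma measure_pmf_compl:
  assumes "n \<ge> 1" "B \<subseteq> {..<n}"
  shows "measure (measure_pmf (pmf_of_set {..<n})) (- B) = 1 - real (card B) / real n"
proof -
  have fin: "finite B" using assms(2) finite_subset by blast
  have "{..<n} \<inter> - B = {..<n} - B" by auto
  then have "card ({..<n} \<inter> - B) = n - card B" using assms(2) fin
    by (simp add: card_Diff_subset)
  moreover have "card B \<le> n" using card_mono[OF _ assms(2)] by simp
  moreover have "measure (measure_pmf (pmf_of_set {..<n})) (- B) = card ({..<n} \<inter> - B) / card {..<n}"
  proof (rule measure_pmf_of_set)
    have "0 \<in> {..<n}" using assms(1) by simp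
    then show "{..<n} \<noteq> {}" by blast
  qed simp
  ultimately show ?thesis using assms(1)
    by (simp add: of_nat_diff field_simps)
qed

lemma inter_Ev_measure:
  assumes n1: "n \<ge> 1" and A: "\<forall>i<k. A i \<subseteq> {..<n}" and T: "T \<subseteq> Sigma {..<k} A"
  shows "measure (coupon_space n) (\<Inter>x\<in>T. Ev m x) = qf n k T ^ m"
proof -
  have eq: "(\<Inter>x\<in>T. Ev m x) = {\<omega>. \<forall>j\<in>{..<k} \<times> {..<m}. \<omega> j \<in> - {a. (fst j, a) \<in> T}}"
  proof (intro set_eqI iffI)
    fix \<omega> assume "\<omega> \<in> (\<Inter>x\<in>T. Ev m x)"
    then have h: "\<forall>x\<in>T. \<forall>t<m. \<omega> (fst x, t) \<noteq> snd x" unfolding Ev_def by auto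
    have "\<forall>i<k. \<forall>t<m. (i, \<omega> (i, t)) \<notin> T"
    proof (intro allI impI)
      fix i t assume "i < k" "t < m"
      show "(i, \<omega> (i, t)) \<notin> T"
      proof
        assume "(i, \<omega> (i, t)) \<in> T"
        then show False using h \<open>t < m\<close> by fastforce
      qed
    qed
    then show "\<omega> \<in> {\<omega>. \<forall>j\<in>{..<k} \<times> {..<m}. \<omega> j \<in> - {a. (fst j, a) \<in> T}}"
      by auto
  next
    fix \<omega> assume "\<omega> \<in> {\<omega>. \<forall>j\<in>{..<k} \<times> {..<m}. \<omega> j \<in> - {a. (fst j, a) \<in> T}}"
    then have h: "\<forall>i<k. \<forall>t<m. (i, \<omega> (i, t)) \<notin> T" by auto
    have "\<forall>x\<in>T. \<forall>t<m. \<omega> (fst x, t) \<noteq> snd x"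
    proof (intro ballI allI impI notI)
      fix x t assume x: "x \<in> T" and t: "t < m" and e: "\<omega> (fst x, t) = snd x"
      have "fst x < k" using T x by auto
      moreover have "(fst x, \<omega> (fst x, t)) \<in> T" using x e by simp
      ultimately show False using h t by blast
    qed
    then show "\<omega> \<in> (\<Inter>x\<in>T. Ev m x)" unfolding Ev_def by auto
  qed
  have "measure (coupon_space n) (\<Inter>x\<in>T. Ev m x)
      = (\<Prod>j\<in>{..<k} \<times> {..<m}. measure (measure_pmf (pmf_of_set {..<n})) (- {a. (fst j, a) \<in> T}))"
    unfolding eq by (rule cs_cyl[OF n1]) auto
  also have "\<dots> = (\<Prod>j\<in>{..<k} \<times> {..<m}. 1 - real (jv T (fst j)) / real n)"
  proof (rule prod.cong[OF refl])
    fix j assume "j \<in> {..<k} \<times> {..<m}"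
    then have "{a. (fst j, a) \<in> T} \<subseteq> {..<n}" using T A by auto
    then show "measure (measure_pmf (pmf_of_set {..<n})) (- {a. (fst j, a) \<in> T}) = 1 - real (jv T (fst j)) / real n"
      using measure_pmf_compl[OF n1] by (simp add: jv_alt)
  qed
  also have "\<dots> = (\<Prod>i<k. \<Prod>t<m. 1 - real (jv T i) / real n)"
    by (subst prod.cartesian_product) (simp add: case_prod_beta)
  also have "\<dots> = qf n k T ^ m"
    unfolding qf_def by (simp add: prod_power_distrib)
  finally show ?thesis .
qed

lemma prod_one_minus_expand:
  fixes f :: "'a \<Rightarrow> real"
  assumes "finite P"
  shows "(\<Prod>x\<in>P. 1 - f x) = (\<Sum>T\<in>Pow P. (-1) ^ card T * (\<Prod>x\<in>T. f x))"
  using assms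
proof (induction P rule: finite_induct)
  case empty
  then show ?case by simp
next
  case (insert r R)
  have "(\<Sum>T\<in>Pow (insert r R). (-1) ^ card T * (\<Prod>x\<in>T. f x))
      = (\<Sum>T\<in>Pow R. (-1) ^ card T * (\<Prod>x\<in>T. f x))
        + (\<Sum>T\<in>Pow R. (-1) ^ card (insert r T) * (\<Prod>x\<in>insert r T. f x))"
    by (rule sum_Pow_insert[OF insert(1,2)])
  also have "(\<Sum>T\<in>Pow R. (-1) ^ card (insert r T) * (\<Prod>x\<in>insert r T. f x))
      = - f r * (\<Sum>T\<in>Pow R. (-1) ^ card T * (\<Prod>x\<in>T. f x))"
    unfolding sum_distrib_left
  proof (rule sum.cong[OF refl])
    fix T assume "T \<in> Pow R"
    then have "finite T" "r \<notin> T" using insert(1,2) finite_subset by auto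
    then show "(-1) ^ card (insert r T) * (\<Prod>x\<in>insert r T. f x) = - f r * ((-1) ^ card T * (\<Prod>x\<in>T. f x))"
      by simp
  qed
  finally show ?case using insert by (simp add: algebra_simps)
qed

lemma prod_indicator_Inter:
  "finite T \<Longrightarrow> (\<Prod>x\<in>T. indicator (E x) \<omega> :: real) = indicator (\<Inter>x\<in>T. E x) \<omega>"
  by (induction T rule: finite_induct) (auto simp: indicator_def)

lemma Ev_sets[measurable]: "Ev m x \<in> sets (coupon_space n)"
proof -
  have "{\<omega>\<in>space (coupon_space n). \<forall>t<m. \<omega> (fst x, t) \<noteq> snd x} \<in> sets (coupon_space n)"
    by measurable
  then show ?thesis unfolding Ev_def by simp
qed

lemma union_Ev_measure:
  assumes n1: "n \<ge> 1" and A: "\<forall>i<k. A i \<subseteq> {..<n}"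
  defines "P \<equiv> Sigma {..<k} A"
  shows "measure (coupon_space n) (\<Union>x\<in>P. Ev m x)
     = (\<Sum>T\<in>Pow P - {{}}. (-1) ^ (card T + 1) * qf n k T ^ m)"
proof -
  interpret prob_space "coupon_space n" by (rule cs_prob[OF n1])
  have finP: "finite P" unfolding P_def using A by (auto intro: finite_subset)
  let ?M = "coupon_space n"
  have IS: "(\<Inter>x\<in>T. Ev m x) \<in> sets ?M" if "T \<subseteq> P" for T
  proof (cases "T = {}")
    case True then show ?thesis using sets.top[of ?M] by simp
  next
    case False
    have "finite T" using finP that finite_subset by auto
    then show ?thesis using False by (intro sets.finite_INT) auto
  qed
  have "measure ?M (- (\<Union>x\<in>P. Ev m x)) = integral\<^sup>L ?M (\<lambda>\<omega>. \<Prod>x\<in>P. 1 - indicator (Ev m x) \<omega>)"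
  proof -
    have "measure ?M (- (\<Union>x\<in>P. Ev m x)) = integral\<^sup>L ?M (indicator (- (\<Union>x\<in>P. Ev m x)))"
      by simp
    also have "indicator (- (\<Union>x\<in>P. Ev m x)) = (\<lambda>\<omega>. \<Prod>x\<in>P. 1 - indicator (Ev m x) \<omega> :: real)"
      using finP by (intro ext) (auto simp: indicator_def)
    finally show ?thesis .
  qed
  also have "\<dots> = integral\<^sup>L ?M (\<lambda>\<omega>. \<Sum>T\<in>Pow P. (-1) ^ card T * indicator (\<Inter>x\<in>T. Ev m x) \<omega>)"
    using finP by (simp add: prod_one_minus_expand prod_indicator_Inter finite_subset)
  also have "\<dots> = (\<Sum>T\<in>Pow P. integral\<^sup>L ?M (\<lambda>\<omega>. (-1) ^ card T * indicator (\<Inter>x\<in>T. Ev m x) \<omega>))"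
    by (rule Bochner_Integration.integral_sum)
      (auto intro!: integrable_real_indicator IS simp: less_top[symmetric] emeasure_finite)
  also have "\<dots> = (\<Sum>T\<in>Pow P. (-1) ^ card T * qf n k T ^ m)"
  proof (rule sum.cong[OF refl])
    fix T assume T: "T \<in> Pow P"
    have "integral\<^sup>L ?M (\<lambda>\<omega>. (-1) ^ card T * indicator (\<Inter>x\<in>T. Ev m x) \<omega>)
        = (-1) ^ card T * measure ?M (\<Inter>x\<in>T. Ev m x)"
      using IS T by simp
    also have "measure ?M (\<Inter>x\<in>T. Ev m x) = qf n k T ^ m"
      by (rule inter_Ev_measure[OF n1 A]) (use T P_def in auto)
    finally show "integral\<^sup>L ?M (\<lambda>\<omega>. (-1) ^ card T * indicator (\<Inter>x\<in>T. Ev m x) \<omega>) = (-1) ^ card T * qf n k T ^ m" .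
  qed
  finally have C: "measure ?M (- (\<Union>x\<in>P. Ev m x)) = (\<Sum>T\<in>Pow P. (-1) ^ card T * qf n k T ^ m)" .
  have U: "(\<Union>x\<in>P. Ev m x) \<in> sets ?M" using finP by auto
  have "measure ?M (\<Union>x\<in>P. Ev m x) = 1 - measure ?M (- (\<Union>x\<in>P. Ev m x))"
    using prob_compl[OF U] by (simp only: cs_space Compl_eq_Diff_UNIV)
  also have "\<dots> = 1 - (\<Sum>T\<in>Pow P. (-1) ^ card T * qf n k T ^ m)" using C by simp
  also have "(\<Sum>T\<in>Pow P. (-1) ^ card T * qf n k T ^ m) = 1 + (\<Sum>T\<in>Pow P - {{}}. (-1) ^ card T * qf n k T ^ m)"
    using finP by (subst sum.remove[of _ "{}"]) (auto simp: qf_def jv_def)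
  finally show ?thesis by (simp add: sum_negf[symmetric])
qed



lemma ae_found:
  fixes i :: nat
  assumes n1: "n \<ge> 1" and a: "a < n"
  shows "AE \<omega> in coupon_space n. \<exists>t. \<omega> (i, t) = a"
proof -
  interpret prob_space "coupon_space n" by (rule cs_prob[OF n1])
  let ?M = "coupon_space n"
  define N where "N = {\<omega> :: (nat \<times> nat) \<Rightarrow> nat. \<forall>t::nat. \<omega> (i, t) \<noteq> a}"
  have Ns: "N \<in> sets ?M"
  proof -
    have "{\<omega>\<in>space ?M. \<forall>t. \<omega> (i, t) \<noteq> a} \<in> sets ?M" by measurable
    then show ?thesis unfolding N_def by simp
  qed
  have bound: "measure ?M N \<le> (1 - 1 / real n) ^ m" for m
  proof -
    have sub: "N \<subseteq> {\<omega>. \<forall>j\<in>{i} \<times> {..<m}. \<omega> j \<in> - {a}}" unfolding N_def by auto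
    have "measure ?M N \<le> measure ?M {\<omega>. \<forall>j\<in>{i} \<times> {..<m}. \<omega> j \<in> - {a}}"
      by (rule finite_measure_mono[OF sub]) (rule cs_cyl_sets, simp)
    also have "\<dots> = (\<Prod>j\<in>{i} \<times> {..<m}. measure (measure_pmf (pmf_of_set {..<n})) (- {a}))"
      by (rule cs_cyl[OF n1]) simp
    also have "\<dots> = (1 - 1 / real n) ^ m"
      using measure_pmf_compl[OF n1, of "{a}"] a by (simp add: card_cartesian_product)
    finally show ?thesis .
  qed
  have lim: "(\<lambda>m. (1 - 1 / real n) ^ m) \<longlonglongrightarrow> 0"
    by (rule LIMSEQ_power_zero) (use n1 in auto)
  have "measure ?M N \<le> 0"
    by (rule LIMSEQ_le_const[OF lim]) (use bound in auto)
  then have "measure ?M N = 0" using measure_nonneg[of ?M N] by linarith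
  then have "N \<in> null_sets ?M" using Ns by (simp add: emeasure_eq_measure null_sets_def)
  then show ?thesis by (rule AE_I') (auto simp: N_def)
qed

lemma ct_exists:
  fixes g :: "nat \<Rightarrow> 'a"
  assumes "finite B" "\<forall>b\<in>B. \<exists>t. g t = b"
  shows "\<exists>m. B \<subseteq> g ` {..<m}"
proof -
  have "B \<subseteq> g ` UNIV" using assms(2) by auto
  then obtain C where C: "finite C" "B = g ` C" using finite_subset_image[OF assms(1)] by blast
  have "C \<subseteq> {..<Suc (Max C)}" using C(1) by (auto simp: less_Suc_eq_le)
  then show ?thesis using C(2) by blast
qed

lemma ct_gt:
  assumes "\<exists>m. B \<subseteq> g ` {..<m}"
  shows "m < completion_time B g \<longleftrightarrow> \<not> B \<subseteq> g ` {..<m}"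
proof
  assume "m < completion_time B g"
  then show "\<not> B \<subseteq> g ` {..<m}" unfolding completion_time_def
    using Least_le[of "\<lambda>m. B \<subseteq> g ` {..<m}" m] by auto
next
  assume h: "\<not> B \<subseteq> g ` {..<m}"
  have L: "B \<subseteq> g ` {..<completion_time B g}" unfolding completion_time_def
    using LeastI_ex[OF assms] .
  show "m < completion_time B g"
  proof (rule ccontr)
    assume "\<not> m < completion_time B g"
    then have "g ` {..<completion_time B g} \<subseteq> g ` {..<m}" by auto
    then show False using L h by blast
  qed
qed

lemma ct_meas[measurable]:
  "(\<lambda>\<omega>. completion_time B (\<lambda>t. \<omega> (i, t))) \<in> measurable (coupon_space n) (count_space UNIV)"
proof -
  have eq: "(\<lambda>\<omega>. completion_time B (\<lambda>t. \<omega> (i, t))) = (\<lambda>\<omega>. LEAST m. \<forall>b\<in>B. \<exists>t<m. \<omega> (i, t) = b)"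
    unfolding completion_time_def by (intro ext arg_cong[where f=Least]) (auto simp: subset_iff image_iff)
  show ?thesis unfolding eq by measurable
qed



lemma qf_bounds:
  assumes n1: "n \<ge> 1" and A: "\<forall>i<k. A i \<subseteq> {..<n}" and T: "T \<subseteq> Sigma {..<k} A" "T \<noteq> {}"
  shows "0 \<le> qf n k T" "qf n k T < 1"
proof -
  have fin: "finite {a. (i, a) \<in> T}" if "i < k" for i
  proof (rule finite_subset[of _ "{..<n}"])
    show "{a. (i, a) \<in> T} \<subseteq> {..<n}" using T(1) A that by auto
  qed simp
  have jle: "jv T i \<le> n" for i
  proof (cases "i < k")
    case True
    have sub: "{a. (i, a) \<in> T} \<subseteq> {..<n}" using T(1) A True by auto
    show ?thesis unfolding jv_alt using card_mono[OF finite_lessThan sub] by simp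
  next
    case False
    then have "{a. (i, a) \<in> T} = {}" using T(1) by auto
    then show ?thesis unfolding jv_alt by simp
  qed
  have f0: "0 \<le> 1 - real (jv T i) / real n" for i
    using jle[of i] n1 by (simp add: field_simps)
  have f1: "1 - real (jv T i) / real n \<le> 1" for i by simp
  show "0 \<le> qf n k T" unfolding qf_def by (intro prod_nonneg) (use f0 in auto)
  obtain i0 a0 where ia: "(i0, a0) \<in> T" using T(2) by auto
  then have i0k: "i0 < k" using T(1) by auto
  have "jv T i0 \<ge> 1" unfolding jv_alt using ia fin[OF i0k]
    by (metis (mono_tags, lifting) One_nat_def Suc_leI card_gt_0_iff empty_iff mem_Collect_eq)
  then have fi0: "1 - real (jv T i0) / real n \<le> 1 - 1 / real n" using n1
    by (simp add: divide_right_mono)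
  have "qf n k T = (1 - real (jv T i0) / real n) * (\<Prod>i\<in>{..<k} - {i0}. 1 - real (jv T i) / real n)"
    unfolding qf_def using i0k by (subst prod.remove[of _ i0]) auto
  also have "\<dots> \<le> (1 - real (jv T i0) / real n) * 1"
    by (intro mult_left_mono prod_le_1) (use f0 f1 in auto)
  also have "\<dots> < 1"
  proof -
    have "1 / real n > 0" using n1 by simp
    then show ?thesis using fi0 by (simp only: mult_1_right)
  qed
  finally show "qf n k T < 1" .
qed

lemma max_completion_formula:
  assumes n1: "n \<ge> 1" and k1: "k \<ge> 1" and A: "\<forall>i<k. A i \<subseteq> {..<n}"
  shows "max_completion n k A = (\<Sum>T\<in>Pow (Sigma {..<k} A). (-1) ^ (card T + 1) / (1 - qf n k T))"
proof -
  interpret prob_space "coupon_space n" by (rule cs_prob[OF n1])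
  let ?M = "coupon_space n"
  define P where "P = Sigma {..<k} A"
  have finP: "finite P" unfolding P_def using A by (auto intro: finite_subset)
  have finA: "finite (A i)" if "i < k" for i
    using A that finite_subset[OF _ finite_lessThan[of n]] by blast
  define ct where "ct i \<omega> = completion_time (A i) (\<lambda>t. \<omega> (i, t))" for i \<omega>
  define Y where "Y \<omega> = Max ((\<lambda>i. ct i \<omega>) ` {..<k})" for \<omega>
  have ctm[measurable]: "ct i \<in> measurable ?M (count_space UNIV)" for i
    unfolding ct_def by measurable
  have Ym[measurable]: "Y \<in> measurable ?M (count_space UNIV)"
  proof -
    have "Y = (\<lambda>\<omega>. Max {y. \<exists>i<k. ct i \<omega> = y})"
      unfolding Y_def by (intro ext arg_cong[where f=Max]) auto
    moreover have "(\<lambda>\<omega>. Max {y. \<exists>i<k. ct i \<omega> = y}) \<in> measurable ?M (count_space UNIV)"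
      by measurable
    ultimately show ?thesis by simp
  qed
  have good: "AE \<omega> in ?M. \<forall>x\<in>P. \<exists>t. \<omega> (fst x, t) = snd x"
    by (rule AE_finite_allI[OF finP]) (use A n1 in \<open>fastforce simp: P_def intro!: ae_found\<close>)
  have tail: "AE \<omega> in ?M. \<forall>m. (m < Y \<omega> \<longleftrightarrow> \<omega> \<in> (\<Union>x\<in>P. Ev m x))"
    using good
  proof eventually_elim
    case (elim \<omega>)
    show ?case
    proof
      fix m
      have ex: "\<exists>m. A i \<subseteq> (\<lambda>t. \<omega> (i, t)) ` {..<m}" if "i < k" for i
        using elim finA[OF that] that by (intro ct_exists) (auto simp: P_def)
      have "m < Y \<omega> \<longleftrightarrow> (\<exists>i<k. m < ct i \<omega>)"
      proof -
        have "0 \<in> {..<k}" using k1 by simp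
        then have kne: "{..<k} \<noteq> {}" by blast
        show ?thesis unfolding Y_def using kne by (subst Max_gr_iff) auto
      qed
      also have "\<dots> \<longleftrightarrow> (\<exists>i<k. \<not> A i \<subseteq> (\<lambda>t. \<omega> (i, t)) ` {..<m})"
        unfolding ct_def using ct_gt[OF ex] by blast
      also have "\<dots> \<longleftrightarrow> \<omega> \<in> (\<Union>x\<in>P. Ev m x)"
        unfolding P_def Ev_def by (force simp: subset_iff image_iff)
      finally show "m < Y \<omega> \<longleftrightarrow> \<omega> \<in> (\<Union>x\<in>P. Ev m x)" .
    qed
  qed
  define u where "u m = measure ?M (\<Union>x\<in>P. Ev m x)" for m
  have u_eq: "u m = (\<Sum>T\<in>Pow P - {{}}. (-1) ^ (card T + 1) * qf n k T ^ m)" for m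
    unfolding u_def P_def by (rule union_Ev_measure[OF n1 A])
  have qb: "0 \<le> qf n k T" "qf n k T < 1" if "T \<in> Pow P - {{}}" for T
    using qf_bounds[OF n1 A, of T] that by (auto simp: P_def)
  have summ: "summable (\<lambda>m. (-1) ^ (card T + 1) * qf n k T ^ m)" if "T \<in> Pow P - {{}}" for T
    using qb[OF that] by (intro summable_mult summable_geometric) auto
  have su: "summable u" unfolding u_eq by (intro summable_sum summ)
  have suminf_u: "(\<Sum>m. u m) = (\<Sum>T\<in>Pow P - {{}}. (-1) ^ (card T + 1) / (1 - qf n k T))"
    unfolding u_eq
  proof (subst suminf_sum)
    show "summable (\<lambda>m. (-1) ^ (card T + 1) * qf n k T ^ m)" if "T \<in> Pow P - {{}}" for T
      using summ[OF that] .
    show "(\<Sum>T\<in>Pow P - {{}}. \<Sum>m. (-1) ^ (card T + 1) * qf n k T ^ m)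
        = (\<Sum>T\<in>Pow P - {{}}. (-1) ^ (card T + 1) / (1 - qf n k T))"
    proof (rule sum.cong[OF refl])
      fix T assume T: "T \<in> Pow P - {{}}"
      have "(\<Sum>m. (-1) ^ (card T + 1) * qf n k T ^ m) = (-1) ^ (card T + 1) * (\<Sum>m. qf n k T ^ m)"
        using qb[OF T] by (intro suminf_mult summable_geometric) auto
      also have "(\<Sum>m. qf n k T ^ m) = 1 / (1 - qf n k T)"
        using qb[OF T] by (intro suminf_geometric) auto
      finally show "(\<Sum>m. (-1) ^ (card T + 1) * qf n k T ^ m) = (-1) ^ (card T + 1) / (1 - qf n k T)"
        by simp
    qed
  qed
  have u0: "u m \<ge> 0" for m unfolding u_def by simp
  have "max_completion n k A = integral\<^sup>L ?M (\<lambda>\<omega>. real (Y \<omega>))"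
    unfolding max_completion_def Y_def ct_def by simp
  also have "\<dots> = enn2real (\<integral>\<^sup>+ \<omega>. ennreal (real (Y \<omega>)) \<partial>?M)"
    by (rule integral_eq_nn_integral) auto
  also have "(\<integral>\<^sup>+ \<omega>. ennreal (real (Y \<omega>)) \<partial>?M) = (\<integral>\<^sup>+ \<omega>. of_nat (Y \<omega>) \<partial>?M)"
    by (simp add: ennreal_of_nat_eq_real_of_nat)
  also have "\<dots> = (\<Sum>m. emeasure ?M {\<omega>\<in>space ?M. m < Y \<omega>})"
    by (rule nn_integral_nat_function) measurable
  also have "\<dots> = (\<Sum>m. ennreal (u m))"
  proof (rule suminf_cong)
    fix m
    have "emeasure ?M {\<omega>\<in>space ?M. m < Y \<omega>} = emeasure ?M (\<Union>x\<in>P. Ev m x)"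
    proof (rule emeasure_eq_AE)
      show "{\<omega>\<in>space ?M. m < Y \<omega>} \<in> sets ?M" by measurable
    qed (use tail finP in auto)
    then show "emeasure ?M {\<omega>\<in>space ?M. m < Y \<omega>} = ennreal (u m)"
      unfolding u_def by (simp add: emeasure_eq_measure)
  qed
  also have "\<dots> = ennreal (\<Sum>m. u m)" by (rule suminf_ennreal2[OF u0 su])
  also have "enn2real \<dots> = (\<Sum>m. u m)" using suminf_nonneg[OF su u0] by simp
  also have "\<dots> = (\<Sum>T\<in>Pow P. (-1) ^ (card T + 1) / (1 - qf n k T))"
    unfolding suminf_u using finP by (subst (2) sum.remove[of _ "{}"]) (auto simp: qf_def jv_def)
  finally show ?thesis unfolding P_def .
qed



lemma card_Qset: "card (Qset k s) = (\<Sum>i<k. s i)"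
  unfolding Qset_def by simp

lemma pairs_eq:
  fixes k :: nat and s :: "nat \<Rightarrow> nat"
  shows "(\<Sum>(i,j)\<in>{(i,j). i < j \<and> j < k}. real (s i * s j)) = (\<Sum>i<k. \<Sum>l<i. real (s i * s l))"
proof -
  have eq: "{(i,j). i < j \<and> j < k} = (\<lambda>(j,i). (i,j)) ` (SIGMA j:{..<k}. {..<j})" by auto
  have inj: "inj_on (\<lambda>(j,i). (i::nat,j::nat)) (SIGMA j:{..<k}. {..<j})" by (auto simp: inj_on_def)
  have "(\<Sum>(i,j)\<in>{(i,j). i < j \<and> j < k}. real (s i * s j))
      = (\<Sum>(j,i)\<in>(SIGMA j:{..<k}. {..<j}). real (s i * s j))"
    unfolding eq by (subst sum.reindex[OF inj]) (simp add: case_prod_beta)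
  also have "\<dots> = (\<Sum>j<k. \<Sum>i<j. real (s i * s j))"
    by (simp add: sum.Sigma)
  also have "\<dots> = (\<Sum>i<k. \<Sum>l<i. real (s i * s l))"
    by (simp add: mult.commute)
  finally show ?thesis .
qed

lemma jv_le_s: "T \<subseteq> Qset k s \<Longrightarrow> i < k \<Longrightarrow> jv T i \<le> s i"
proof -
  assume T: "T \<subseteq> Qset k s" and i: "i < k"
  have "card (({i} \<times> {..<s i}) \<inter> T) \<le> card ({i} \<times> {..<s i})"
    by (rule card_mono) auto
  then show ?thesis using jv_Qset[OF T i] by (simp add: card_cartesian_product)
qed

lemma e2_zero:
  assumes S: "(\<Sum>i<k. s i) \<le> 1" and T: "T \<subseteq> Qset k s"
  shows "e2 k T = 0"
  unfolding e2_def
proof (intro sum.neutral ballI)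
  fix i l assume i: "i \<in> {..<k}" and l: "l \<in> {..<i}"
  have "s i + s l = (\<Sum>j\<in>{i, l}. s j)" using l by simp
  also have "\<dots> \<le> (\<Sum>j<k. s j)" using i l by (intro sum_mono2) auto
  finally have "s i + s l \<le> 1" using S by simp
  then have "s i = 0 \<or> s l = 0" by auto
  then have "jv T i = 0 \<or> jv T l = 0" using jv_le_s[OF T] i l by (metis le_zero_eq lessThan_iff less_trans)
  then show "real (jv T i) * real (jv T l) = 0" by auto
qed

lemma second_order_all:
  fixes k :: nat and s :: "nat \<Rightarrow> nat"
  defines "S \<equiv> (\<Sum>i<k. s i)"
  shows "(\<Sum>T\<in>Pow (Qset k s). (-1) ^ (card T + 1) * e2 k T / (real (card T))^2)
       = - (\<Sum>i<k. \<Sum>l<i. real (s i * s l)) * (harm S - 1) / (real S * (real S - 1))"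
proof (cases "S \<ge> 2")
  case True
  then show ?thesis using second_order_sum[of k s] unfolding S_def card_Qset by simp
next
  case False
  then have "S \<le> 1" by simp
  then have "e2 k T = 0" if "T \<in> Pow (Qset k s)" for T using e2_zero[where k=k and s=s and T=T] that S_def by auto
  moreover have "real S * (real S - 1) = 0" using \<open>S \<le> 1\<close> by (cases S) auto
  ultimately show ?thesis by simp
qed

lemma card_jv: "T \<subseteq> Sigma {..<k} B \<Longrightarrow> finite T \<Longrightarrow> card T = (\<Sum>i<k. jv T i)"
proof -
  assume T: "T \<subseteq> Sigma {..<k} B" and fT: "finite T"
  have "T = (\<Union>i\<in>{..<k}. {x\<in>T. fst x = i})" using T by auto
  then have "card T = card (\<Union>i\<in>{..<k}. {x\<in>T. fst x = i})" by simp
  also have "\<dots> = (\<Sum>i<k. card {x\<in>T. fst x = i})"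
    by (rule card_UN_disjoint) (use fT in auto)
  finally show ?thesis unfolding jv_def .
qed

lemma reindex_sum:
  assumes A: "\<forall>i<k. A i \<subseteq> {..<n} \<and> card (A i) = s i"
  shows "(\<Sum>T\<in>Pow (Sigma {..<k} A). (-1) ^ (card T + 1) / (1 - qf n k T))
       = (\<Sum>T\<in>Pow (Qset k s). (-1) ^ (card T + 1) / (1 - qf n k T :: real))"
proof -
  have "\<forall>i\<in>{..<k}. \<exists>h. bij_betw h {..<s i} (A i)"
  proof
    fix i assume i: "i \<in> {..<k}"
    have "finite (A i)" using A i finite_subset[OF _ finite_lessThan[of n]] by blast
    then obtain h where "bij_betw h {0..<card (A i)} (A i)" using ex_bij_betw_nat_finite by blast
    then show "\<exists>h. bij_betw h {..<s i} (A i)" using A i by (auto simp: atLeast0LessThan)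
  qed
  then obtain H where H: "\<forall>i\<in>{..<k}. bij_betw (H i) {..<s i} (A i)" by metis
  define e where "e x = (fst x, H (fst x) (snd x))" for x
  have fe: "fst (e x) = fst x" for x unfolding e_def by simp
  have be: "bij_betw e (Qset k s) (Sigma {..<k} A)"
    unfolding bij_betw_def
  proof
    show "inj_on e (Qset k s)"
    proof (rule inj_onI)
      fix x y assume x: "x \<in> Qset k s" and y: "y \<in> Qset k s" and exy: "e x = e y"
      then have f: "fst x = fst y" using fe by metis
      then have "H (fst x) (snd x) = H (fst x) (snd y)" using exy unfolding e_def by simp
      moreover have "inj_on (H (fst x)) {..<s (fst x)}" using H x unfolding Qset_def bij_betw_def by auto
      moreover have "snd x \<in> {..<s (fst x)}" "snd y \<in> {..<s (fst x)}" using x y f unfolding Qset_def by auto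
      ultimately have "snd x = snd y" by (meson inj_onD)
      then show "x = y" using f by (simp add: prod_eq_iff)
    qed
    show "e ` Qset k s = Sigma {..<k} A"
    proof
      show "e ` Qset k s \<subseteq> Sigma {..<k} A"
        using H unfolding Qset_def e_def bij_betw_def by (auto; metis imageI lessThan_iff)
      show "Sigma {..<k} A \<subseteq> e ` Qset k s"
      proof
        fix x assume x: "x \<in> Sigma {..<k} A"
        then have "snd x \<in> H (fst x) ` {..<s (fst x)}" using H unfolding bij_betw_def by auto
        then obtain b where b: "b < s (fst x)" "snd x = H (fst x) b" by auto
        have "(fst x, b) \<in> Qset k s" using x b unfolding Qset_def by auto
        moreover have "e (fst x, b) = x" using b unfolding e_def by (simp add: prod_eq_iff)
        ultimately show "x \<in> e ` Qset k s" by (metis image_eqI)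
      qed
    qed
  qed
  have bP: "bij_betw (image e) (Pow (Qset k s)) (Pow (Sigma {..<k} A))"
    by (rule bij_betw_Pow[OF be])
  have "(\<Sum>T\<in>Pow (Sigma {..<k} A). (-1) ^ (card T + 1) / (1 - qf n k T))
      = (\<Sum>T\<in>Pow (Qset k s). (-1) ^ (card (e ` T) + 1) / (1 - qf n k (e ` T)))"
    by (rule sum.reindex_bij_betw[OF bP, symmetric])
  also have "\<dots> = (\<Sum>T\<in>Pow (Qset k s). (-1) ^ (card T + 1) / (1 - qf n k T))"
  proof (rule sum.cong[OF refl])
    fix T assume "T \<in> Pow (Qset k s)"
    then have T: "T \<subseteq> Qset k s" by auto
    have inj: "inj_on e T" using be T unfolding bij_betw_def by (auto intro: inj_on_subset)
    have "jv (e ` T) i = jv T i" for i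
    proof -
      have "{x\<in>e ` T. fst x = i} = e ` {x\<in>T. fst x = i}" using fe by auto
      moreover have "inj_on e {x\<in>T. fst x = i}" using inj by (auto intro: inj_on_subset)
      ultimately show ?thesis unfolding jv_def by (simp add: card_image)
    qed
    then have "qf n k (e ` T) = qf n k T" unfolding qf_def by simp
    moreover have "card (e ` T) = card T" using inj by (simp add: card_image)
    ultimately show "(-1) ^ (card (e ` T) + 1) / (1 - qf n k (e ` T)) = (-1) ^ (card T + 1) / (1 - qf n k T)"
      by simp
  qed
  finally show ?thesis .
qed



theorem mainTheorem2:
  fixes k :: nat and s :: "nat \<Rightarrow> nat" and A :: "nat \<Rightarrow> nat \<Rightarrow> nat set"
  assumes "k \<ge> 1"
    and "\<forall>\<^sub>F n in sequentially. \<forall>i<k. A n i \<subseteq> {..<n} \<and> card (A n i) = s i"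
  shows "(\<lambda>n. max_completion n k (A n)
            - (real n * harm (\<Sum>i<k. s i)
               - (harm (\<Sum>i<k. s i) - 1)
                 * (\<Sum>(i,j)\<in>{(i,j). i < j \<and> j < k}. real (s i * s j))
                 / (real (\<Sum>i<k. s i) * (real (\<Sum>i<k. s i) - 1))))
         \<longlonglongrightarrow> 0"
proof -
  define S where "S = (\<Sum>i<k. s i)"
  define Q where "Q = Qset k s"
  define Pr where "Pr = (\<Sum>i<k. \<Sum>l<i. real (s i * s l))"
  define g where "g T n = (-1) ^ (card T + 1) / (1 - qf n k T)
      - (-1) ^ (card T + 1) * (real n / real (card T) + e2 k T / (real (card T))^2)" for T n
  have cQ: "card Q = S" unfolding Q_def S_def by (rule card_Qset)
  have lim: "(\<lambda>n. \<Sum>T\<in>Pow Q. g T n) \<longlonglongrightarrow> 0"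
  proof (rule tendsto_null_sum)
    fix T assume TQ: "T \<in> Pow Q"
    then have T: "T \<subseteq> Qset k s" unfolding Q_def by auto
    have fT: "finite T" using T finite_Qset finite_subset by blast
    show "(\<lambda>n. g T n) \<longlonglongrightarrow> 0"
    proof (cases "T = {}")
      case True
      then show ?thesis by (simp add: g_def qf_def jv_def)
    next
      case False
      have ca: "(\<Sum>i<k. real (jv T i)) = real (card T)"
        using card_jv[OF T[unfolded Qset_def] fT] by simp
      have apos: "(\<Sum>i<k. real (jv T i)) > 0" unfolding ca using False fT by auto
      have tl: "(\<lambda>n. 1 / (1 - (\<Prod>i<k. 1 - real (jv T i) / real n))
          - (real n / (\<Sum>i<k. real (jv T i)) + (\<Sum>i<k. \<Sum>l<i. real (jv T i) * real (jv T l)) / (\<Sum>i<k. real (jv T i))^2))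
          \<longlonglongrightarrow> 0"
        by (rule term_limit[OF _ apos]) simp
      have "(\<lambda>n. (-1) ^ (card T + 1) * (1 / (1 - (\<Prod>i<k. 1 - real (jv T i) / real n))
          - (real n / (\<Sum>i<k. real (jv T i)) + (\<Sum>i<k. \<Sum>l<i. real (jv T i) * real (jv T l)) / (\<Sum>i<k. real (jv T i))^2)))
          \<longlonglongrightarrow> 0"
        by (rule tendsto_mult_right_zero[OF tl])
      moreover have "(-1) ^ (card T + 1) * (1 / (1 - (\<Prod>i<k. 1 - real (jv T i) / real n))
          - (real n / (\<Sum>i<k. real (jv T i)) + (\<Sum>i<k. \<Sum>l<i. real (jv T i) * real (jv T l)) / (\<Sum>i<k. real (jv T i))^2))
          = g T n" for n
        unfolding g_def qf_def e2_def ca by (simp add: right_diff_distrib)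
      ultimately show ?thesis by simp
    qed
  qed
  have ev: "\<forall>\<^sub>F n in sequentially. (\<Sum>T\<in>Pow Q. g T n) = max_completion n k (A n)
            - (real n * harm (\<Sum>i<k. s i)
               - (harm (\<Sum>i<k. s i) - 1)
                 * (\<Sum>(i,j)\<in>{(i,j). i < j \<and> j < k}. real (s i * s j))
                 / (real (\<Sum>i<k. s i) * (real (\<Sum>i<k. s i) - 1)))"
    using assms(2) eventually_ge_at_top[of "1::nat"]
  proof eventually_elim
    case (elim n)
    have A: "\<forall>i<k. A n i \<subseteq> {..<n}" using elim(1) by auto
    have mc: "max_completion n k (A n) = (\<Sum>T\<in>Pow Q. (-1) ^ (card T + 1) / (1 - qf n k T))"
      unfolding Q_def using max_completion_formula[OF elim(2) assms(1) A] reindex_sum[OF elim(1)] by simp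
    have s1: "(\<Sum>T\<in>Pow Q. (-1) ^ (card T + 1) * (real n / real (card T) + e2 k T / (real (card T))^2))
        = real n * (\<Sum>T\<in>Pow Q. (-1) ^ (card T + 1) / real (card T))
          + (\<Sum>T\<in>Pow Q. (-1) ^ (card T + 1) * e2 k T / (real (card T))^2)"
    proof -
      have "(\<Sum>T\<in>Pow Q. (-1) ^ (card T + 1) * (real n / real (card T) + e2 k T / (real (card T))^2))
          = (\<Sum>T\<in>Pow Q. real n * ((-1) ^ (card T + 1) / real (card T))
              + (-1) ^ (card T + 1) * e2 k T / (real (card T))^2)"
        by (intro sum.cong refl) (simp add: distrib_left)
      also have "\<dots> = real n * (\<Sum>T\<in>Pow Q. (-1) ^ (card T + 1) / real (card T))
          + (\<Sum>T\<in>Pow Q. (-1) ^ (card T + 1) * e2 k T / (real (card T))^2)"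
        by (simp only: sum.distrib sum_distrib_left)
      finally show ?thesis .
    qed
    have s2: "(\<Sum>T\<in>Pow Q. (-1) ^ (card T + 1) / real (card T)) = harm S"
      using sum_harm[of Q] finite_Qset cQ unfolding Q_def by simp
    have s3: "(\<Sum>T\<in>Pow Q. (-1) ^ (card T + 1) * e2 k T / (real (card T))^2)
        = - Pr * (harm S - 1) / (real S * (real S - 1))"
      unfolding Q_def Pr_def S_def by (rule second_order_all)
    have pe: "(\<Sum>(i,j)\<in>{(i,j). i < j \<and> j < k}. real (s i * s j)) = Pr"
      unfolding Pr_def by (rule pairs_eq)
    have "(\<Sum>T\<in>Pow Q. g T n) = max_completion n k (A n)
        - (\<Sum>T\<in>Pow Q. (-1) ^ (card T + 1) * (real n / real (card T) + e2 k T / (real (card T))^2))"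
      unfolding g_def mc by (simp only: sum_subtractf)
    also have "\<dots> = max_completion n k (A n) - (real n * harm S - (harm S - 1) * Pr / (real S * (real S - 1)))"
      unfolding s1 s2 s3 by (simp add: algebra_simps minus_divide_left)
    finally show ?case unfolding pe S_def .
  qed
  show ?thesis by (rule Lim_transform_eventually[OF lim ev])
qed

end
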